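(* Let $\lambda>0$, $\xi>0$, $v_2<v_1$ with either $v_2<0<v_1$ or $0<v_2<v_1$. Let $X(t)$ be the extended telegraph process driven by GCPs with parameter $\lambda$ (no resets) and $\tilde X(t)$ the same process subject to Poissonian resets to the origin at rate $\xi$, both started at the origin with velocity $v_j$, and let $E_j$ denote the corresponding conditional expectations. Define the mean-square distance $\Delta_j^\lambda(\xi,t):=E_j[\tilde X^2(t)]+E_j[X^2(t)]-2E_j[\tilde X(t)]\,E_j[X(t)]$. Then for $t\ge0$ and $j=1,2$, $$\Delta_j^\lambda(\xi,t)=E_j[X^2(t)]+A_j^\lambda(\xi,t),\qquad E_j[X^2(t)]=\frac{t^2[3v_j^2+\lambda t(v_1^2+v_1v_2+v_2^2)]}{3(1+\lambda t)},$$ where $$ \begin{aligned} A_j^\lambda(\xi,t)&=-te^{-\xi t}\Big[\frac{2v_j^2-v_1v_2-v_{3-j}^2}{3\lambda(1+\lambda t)}+\frac{2(v_1^2+v_1v_2+v_2^2)}{3\xi}+\frac{t(v_j-v_{3-j})[2v_j+\lambda t(v_1+v_2)]}{2(1+\lambda t)^2}\Big]\\ &\quad+(1-e^{-\xi t})\Big[\frac{2(v_1^2+v_1v_2+v_2^2)}{3\xi^2}+\frac{2v_j^2-v_1v_2-v_{3-j}^2}{3\lambda}\Big(\frac1\xi-\frac1\lambda\Big)-\frac{t(2v_j+\lambda t(v_1+v_2))}{2(1+\lambda t)}\Big(\frac{v_j-v_{3-j}}{\lambda}+\frac{v_1+v_2}{\xi}\Big)\Big]\\ &\quad+\frac{e^{\xi/\lambda}\xi}{\lambda^2}G_\xi(t)\Big[\frac{2v_j^2-v_1v_2-v_{3-j}^2}{3\lambda}+\frac{t(v_j-v_{3-j})(2v_j+\lambda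 t(v_1+v_2))}{2(1+\lambda t)}\Big], \end{aligned} $$ with $G_\xi(t)=\Gamma[0,\frac\xi\lambda,\frac\xi\lambda(1+\lambda t)]$.
   Context: GCP with intensity $\lambda>0$: a Poisson process whose rate is random, exponentially distributed with mean $\lambda$; increments satisfy $P\{\tilde N_\lambda(t+s)-\tilde N_\lambda(t)=k\}=\frac{1}{1+\lambda s}(\frac{\lambda s}{1+\lambda s})^k$. Process without resets $X(t)$: a particle starts at the origin with velocity $v_j$ ($v_1,v_2\ne0$, $v_2<v_1$), moves with velocity alternating between $v_1$ and $v_2$, the periods at velocity $v_1$ and at $v_2$ governed by two independent GCPs of intensity $\lambda$; its law given $V(0)=v_j$ has generalized density $p(x,t|v_j)=\frac{\delta(x-v_jt)}{1+\lambda t}+\mathbb 1_{\{v_2t<x<v_1t\}}\frac{\lambda}{(v_1-v_2)(1+\lambda t)}$ ($\delta$ Dirac delta), and it is known that $E_j[X(t)]=\frac{t[2v_j+\lambda t(v_1+v_2)]}{2(1+\lambda t)}$. Reset process $\tilde X(t)$: same dynamics but instantaneously reset to the origin at the epochs of an independent Poisson process of rate $\xi$, restarting afresh with velocity $v_j$; its density is $\tilde p(x,t|v_j)=e^{-\xi t}p(x,t|v_j)+\xi\int_0^te^{-\xi s}p(x,s|v_j)ds$. $\Gamma(a,z_0,z_1)=\int_{z_0}^{z_1}s^{a-1}e^{-s}ds$. *)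

theory Defs
  imports "HOL-Analysis.Analysis"
begin

definition vel :: "real \<Rightarrow> real \<Rightarrow> nat \<Rightarrow> real" where
  "vel v1 v2 j = (if j = 1 then v1 else v2)"

text \<open>Expectation of f(X(t)) given V(0) = vj for the process without resets, i.e. integration of
  f against the generalized density
  p(x,t|vj) = delta(x - vj t)/(1+lam t) + 1_{v2 t < x < v1 t} lam/((v1-v2)(1+lam t)).\<close>
definition E_free :: "real \<Rightarrow> real \<Rightarrow> real \<Rightarrow> real \<Rightarrow> real \<Rightarrow> (real \<Rightarrow> real) \<Rightarrow> real" where
  "E_free lam v1 v2 vj t f =
     f (vj * t) / (1 + lam * t)
     + lam / ((v1 - v2) * (1 + lam * t)) * integral {v2 * t .. v1 * t} f"

text \<open>Expectation of f(X~(t)) for the reset process, whose density is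
  e^{-xi t} p(x,t|vj) + xi int_0^t e^{-xi s} p(x,s|vj) ds.\<close>
definition E_reset :: "real \<Rightarrow> real \<Rightarrow> real \<Rightarrow> real \<Rightarrow> real \<Rightarrow> real \<Rightarrow> (real \<Rightarrow> real) \<Rightarrow> real" where
  "E_reset lam xi v1 v2 vj t f =
     exp (- xi * t) * E_free lam v1 v2 vj t f
     + xi * integral {0 .. t} (\<lambda>s. exp (- xi * s) * E_free lam v1 v2 vj s f)"

definition Delta :: "real \<Rightarrow> real \<Rightarrow> real \<Rightarrow> real \<Rightarrow> real \<Rightarrow> real \<Rightarrow> real" where
  "Delta lam xi v1 v2 vj t =
     E_reset lam xi v1 v2 vj t (\<lambda>x. x ^ 2) + E_free lam v1 v2 vj t (\<lambda>x. x ^ 2)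
     - 2 * E_reset lam xi v1 v2 vj t (\<lambda>x. x) * E_free lam v1 v2 vj t (\<lambda>x. x)"

definition Gamma_gen :: "real \<Rightarrow> real \<Rightarrow> real \<Rightarrow> real" where
  "Gamma_gen a z0 z1 = integral {z0 .. z1} (\<lambda>s. s powr (a - 1) * exp (- s))"

end

theory Submission
  imports Defs
begin

lemma int_x: assumes "a \<le> b" shows "((\<lambda>x::real. x) has_integral (b^2 - a^2)/2) {a..b}"
proof -
  have "((\<lambda>x::real. x) has_integral ((\<lambda>x. x^2/2) b - (\<lambda>x. x^2/2) a)) {a..b}"
    by (rule fundamental_theorem_of_calculus[OF assms])
       (auto intro!: derivative_eq_intros simp: has_real_derivative_iff_has_vector_derivative[symmetric])
  then show ?thesis by (simp add: diff_divide_distrib)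
qed

lemma int_x2: assumes "a \<le> b" shows "((\<lambda>x::real. x^2) has_integral (b^3 - a^3)/3) {a..b}"
proof -
  have "((\<lambda>x::real. x^2) has_integral ((\<lambda>x. x^3/3) b - (\<lambda>x. x^3/3) a)) {a..b}"
    by (rule fundamental_theorem_of_calculus[OF assms])
       (auto intro!: derivative_eq_intros simp: has_real_derivative_iff_has_vector_derivative[symmetric] power2_eq_square power3_eq_cube)
  then show ?thesis by (simp add: diff_divide_distrib)
qed

lemma int_poly:
  fixes xi aa bb cc t :: real
  assumes "xi > 0" "t \<ge> 0"
  defines "Q \<equiv> \<lambda>s. aa * s^2 / xi + (2* aa/xi^2 + bb/xi) * s + 2* aa/xi^3 + bb/xi^2 + cc/xi"
  shows "((\<lambda>s. exp (-xi* s) * (aa* s^2 + bb* s + cc)) has_integral (Q 0 - exp (-xi* t) * Q t)) {0..t}"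
proof -
  have "((\<lambda>s. exp (-xi* s) * (aa* s^2 + bb* s + cc)) has_integral ((\<lambda>s. - exp (-xi* s) * Q s) t - (\<lambda>s. - exp (-xi* s) * Q s) 0)) {0..t}"
  proof (rule fundamental_theorem_of_calculus[OF assms(2)])
    fix x assume "x \<in> {0..t}"
    have "((\<lambda>s. - exp (-xi* s) * Q s) has_real_derivative exp (-xi* x) * (aa* x^2 + bb* x + cc)) (at x)"
      unfolding Q_def
      using \<open>xi > 0\<close> by (auto intro!: derivative_eq_intros simp: field_simps power2_eq_square power3_eq_cube)
    then show "((\<lambda>s. - exp (-xi* s) * Q s) has_vector_derivative exp (-xi* x) * (aa* x^2 + bb* x + cc)) (at x within {0..t})"
      by (simp add: has_real_derivative_iff_has_vector_derivative[symmetric] has_field_derivative_at_within)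
  qed
  then show ?thesis by simp
qed

lemma int_recip:
  fixes xi lam t :: real
  assumes "xi > 0" "lam > 0" "t \<ge> 0"
  shows "((\<lambda>s. exp (-xi* s) / (1 + lam* s)) has_integral
           exp (xi/lam) / lam * Gamma_gen 0 (xi/lam) (xi/lam*(1+lam* t))) {0..t}"
proof -
  define g where "g = (\<lambda>s. xi/lam*(1+lam* s))"
  define f where "f = (\<lambda>u::real. u powr (0 - 1) * exp (- u))"
  have "((\<lambda>x. xi *\<^sub>R f (g x)) has_integral (integral {g 0..g t} f)) {0..t}"
  proof (rule has_integral_substitution[where c="xi/lam" and d="g t"])
    have "xi*1 \<le> xi*(1+lam* t)" using assms by (intro mult_left_mono) auto
    then show "g 0 \<le> g t" using assms by (simp add: g_def divide_right_mono)
    show "g ` {0..t} \<subseteq> {xi/lam..g t}"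
    proof (clarsimp simp: g_def)
      fix s assume s: "0 \<le> s" "s \<le> t"
      have "xi*1 \<le> xi*(1+lam * s)" using assms s by (intro mult_left_mono) auto
      moreover have "xi*(1+lam * s) \<le> xi*(1+lam* t)" using assms s by (intro mult_left_mono) auto
      ultimately show "xi / lam \<le> xi * (1 + lam * s) / lam \<and> xi * (1 + lam * s) / lam \<le> xi * (1 + lam * t) / lam"
        using assms by (simp add: divide_right_mono)
    qed
    show "continuous_on {xi / lam..g t} f" unfolding f_def
      using assms by (intro continuous_intros) (auto simp: field_simps)
    fix x assume "x \<in> {0..t}"
    show "(g has_field_derivative xi) (at x within {0..t})" unfolding g_def
      apply (rule derivative_eq_intros refl)+ using assms by simp
  qed (use assms in \<open>auto simp: divide_le_0_iff\<close>)
  moreover have eqs: "xi *\<^sub>R f (g s) = lam * exp (- (xi/lam)) * (exp (-xi* s) / (1 + lam* s))" if "s \<in> {0..t}" for s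
  proof -
    have h1: "1+lam* s > 0" using that assms by (simp add: add_pos_nonneg)
    then have pos: "xi/lam*(1+lam* s) > 0" using assms by simp
    have "exp (- (xi/lam*(1+lam* s))) = exp (- (xi/lam)) * exp (-xi* s)"
      using assms by (simp add: exp_add[symmetric] field_simps)
    then show ?thesis using pos assms that h1
      by (simp add: f_def g_def powr_minus_divide field_simps)
  qed
  ultimately have "((\<lambda>s. lam * exp (- (xi/lam)) * (exp (-xi* s) / (1 + lam* s))) has_integral (integral {g 0..g t} f)) {0..t}"
    using has_integral_cong[of "{0..t}" "\<lambda>x. xi *\<^sub>R f (g x)" "\<lambda>s. lam * exp (- (xi/lam)) * (exp (-xi* s) / (1 + lam* s))"]
    by blast
  then have "((\<lambda>s. (1 / (lam * exp (- (xi/lam)))) * (lam * exp (- (xi/lam)) * (exp (-xi* s) / (1 + lam* s)))) has_integral (1 / (lam * exp (- (xi/lam)))) * (integral {g 0..g t} f)) {0..t}"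
    by (rule has_integral_mult_right)
  moreover have "(\<lambda>s. (1 / (lam * exp (- (xi/lam)))) * (lam * exp (- (xi/lam)) * (exp (-xi* s) / (1 + lam* s))))
     = (\<lambda>s. exp (-xi* s) / (1 + lam* s))" using assms by auto
  moreover have "(1 / (lam * exp (- (xi/lam)))) * (integral {g 0..g t} f) = exp (xi/lam) / lam * Gamma_gen 0 (xi/lam) (xi/lam*(1+lam* t))"
    by (simp add: Gamma_gen_def f_def g_def exp_minus field_simps)
  ultimately show ?thesis by simp
qed


lemma Ef1:
  fixes lam v1 v2 vj s :: real
  assumes "lam > 0" "v2 < v1" "s \<ge> 0"
  shows "E_free lam v1 v2 vj s (\<lambda>x. x) = s*(2* vj + lam* s*(v1+v2))/(2*(1+lam* s))"
proof -
  have le: "v2* s \<le> v1* s" using assms by (simp add: mult_right_mono)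
  have I: "integral {v2* s..v1* s} (\<lambda>x. x) = ((v1* s)^2 - (v2* s)^2)/2"
    using int_x[OF le] by (rule integral_unique)
  have "1 + lam* s > 0" using assms by (simp add: add_pos_nonneg)
  moreover have "v1 - v2 \<noteq> 0" using assms by simp
  have I': "integral {v2 * s..v1 * s} (\<lambda>x. x) = (v1-v2)*((v1+v2)* s^2/2)"
    unfolding I by (simp add: algebra_simps power2_eq_square)
  have c: "lam/((v1-v2)*(1+lam * s)) * ((v1-v2)* X) = lam* X/(1+lam * s)" for X
    using \<open>v1 - v2 \<noteq> 0\<close> by (metis (no_types, lifting) mult.commute nonzero_mult_divide_mult_cancel_left times_divide_eq_left times_divide_eq_right)
  have num: "vj * s + lam*((v1+v2)* s^2/2) = s*(2* vj + lam * s*(v1+v2))/2"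
    by (simp add: algebra_simps power2_eq_square)
  have "E_free lam v1 v2 vj s (\<lambda>x. x) = (vj * s + lam*((v1+v2)* s^2/2))/(1+lam * s)"
    unfolding E_free_def I' c by (simp add: add_divide_distrib)
  then show ?thesis unfolding num by (simp add: divide_divide_eq_left)
qed

lemma Ef2:
  fixes lam v1 v2 vj s :: real
  assumes "lam > 0" "v2 < v1" "s \<ge> 0"
  shows "E_free lam v1 v2 vj s (\<lambda>x. x^2) = s^2*(3* vj^2 + lam* s*(v1^2+v1* v2+v2^2))/(3*(1+lam* s))"
proof -
  have le: "v2* s \<le> v1* s" using assms by (simp add: mult_right_mono)
  have I: "integral {v2* s..v1* s} (\<lambda>x. x^2) = ((v1* s)^3 - (v2* s)^3)/3"
    using int_x2[OF le] by (rule integral_unique)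
  have "1 + lam* s > 0" using assms by (simp add: add_pos_nonneg)
  moreover have "v1 - v2 \<noteq> 0" using assms by simp
  have I': "integral {v2 * s..v1 * s} (\<lambda>x. x^2) = (v1-v2)*((v1^2+v1 * v2+v2^2)* s^3/3)"
    unfolding I by (simp add: algebra_simps power2_eq_square power3_eq_cube)
  have c: "lam/((v1-v2)*(1+lam * s)) * ((v1-v2)* X) = lam* X/(1+lam * s)" for X
    using \<open>v1 - v2 \<noteq> 0\<close> by (metis (no_types, lifting) mult.commute nonzero_mult_divide_mult_cancel_left times_divide_eq_left times_divide_eq_right)
  have num: "(vj * s)^2 + lam*((v1^2+v1 * v2+v2^2)* s^3/3) = s^2*(3* vj^2 + lam * s*(v1^2+v1 * v2+v2^2))/3"
    by (simp add: algebra_simps power2_eq_square power3_eq_cube)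
  have "E_free lam v1 v2 vj s (\<lambda>x. x^2) = ((vj * s)^2 + lam*((v1^2+v1 * v2+v2^2)* s^3/3))/(1+lam * s)"
    unfolding E_free_def I' c by (simp add: add_divide_distrib)
  then show ?thesis unfolding num by (simp add: divide_divide_eq_left)
qed

lemma Ereset_gen:
  fixes lam xi v1 v2 vj t aa bb cc K :: real and f :: "real \<Rightarrow> real"
  assumes "lam > 0" "xi > 0" "t \<ge> 0"
    and m: "\<And>s. s \<ge> 0 \<Longrightarrow> E_free lam v1 v2 vj s f = aa* s^2 + bb* s + cc + K/(1+lam* s)"
  defines "Q \<equiv> \<lambda>s. aa * s^2 / xi + (2* aa/xi^2 + bb/xi) * s + 2* aa/xi^3 + bb/xi^2 + cc/xi"
  shows "E_reset lam xi v1 v2 vj t f = exp (-xi* t) * E_free lam v1 v2 vj t f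
     + xi * (Q 0 - exp (-xi* t) * Q t + K * (exp (xi/lam) / lam * Gamma_gen 0 (xi/lam) (xi/lam*(1+lam* t))))"
proof -
  have h: "((\<lambda>s. exp (-xi * s) * (aa* s^2 + bb * s + cc) + K * (exp (-xi * s) / (1 + lam * s))) has_integral
     (Q 0 - exp (-xi* t) * Q t) + K * (exp (xi/lam) / lam * Gamma_gen 0 (xi/lam) (xi/lam*(1+lam* t)))) {0..t}"
    unfolding Q_def
    by (intro has_integral_add has_integral_mult_right int_poly int_recip) (use assms in auto)
  have "((\<lambda>s. exp (- xi * s) * E_free lam v1 v2 vj s f) has_integral
     (Q 0 - exp (-xi* t) * Q t) + K * (exp (xi/lam) / lam * Gamma_gen 0 (xi/lam) (xi/lam*(1+lam* t)))) {0..t}"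
    using h
    by (rule has_integral_eq[rotated]) (simp add: m algebra_simps add_divide_distrib)
  then show ?thesis unfolding E_reset_def by (simp add: integral_unique)
qed


lemma final_alg:
  fixes lam xi t vj vk v1 v2 E X G R1 R2 F1 F2 aa1 bb1 cc1 K1 aa2 bb2 cc2 K2 :: real
  assumes "lam > 0" "xi > 0" "t \<ge> 0"
    and hj: "(vj = v1 \<and> vk = v2) \<or> (vj = v2 \<and> vk = v1)"
    and R1: "R1 = E * F1 + xi * (aa1 * 0^2 / xi + (2* aa1/xi^2 + bb1/xi) * 0 + 2* aa1/xi^3 + bb1/xi^2 + cc1/xi
       - E * (aa1 * t^2 / xi + (2* aa1/xi^2 + bb1/xi) * t + 2* aa1/xi^3 + bb1/xi^2 + cc1/xi)
       + K1 * (X / lam * G))"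
    and R2: "R2 = E * F2 + xi * (aa2 * 0^2 / xi + (2* aa2/xi^2 + bb2/xi) * 0 + 2* aa2/xi^3 + bb2/xi^2 + cc2/xi
       - E * (aa2 * t^2 / xi + (2* aa2/xi^2 + bb2/xi) * t + 2* aa2/xi^3 + bb2/xi^2 + cc2/xi)
       + K2 * (X / lam * G))"
    and F1: "F1 = t * (2 * vj + lam * t * (v1 + v2)) / (2 * (1 + lam * t))"
    and F2: "F2 = t^2 * (3 * vj^2 + lam * t * (v1^2 + v1 * v2 + v2^2)) / (3 * (1 + lam * t))"
    and c1: "aa1 = 0" "bb1 = (v1+v2)/2" "cc1 = (vj - vk)/(2 * lam)" "K1 = - ((vj - vk)/(2 * lam))"
    and c2: "aa2 = (v1^2 + v1 * v2 + v2^2)/3" "bb2 = (2 * vj^2 - v1 * v2 - vk^2)/(3 * lam)"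
            "cc2 = - ((2 * vj^2 - v1 * v2 - vk^2)/(3 * lam^2))" "K2 = (2 * vj^2 - v1 * v2 - vk^2)/(3 * lam^2)"
  shows "R2 + F2 - 2 * R1 * F1 = F2 +
           (let vj = vj; vk = vk;
                S = v1 ^ 2 + v1 * v2 + v2 ^ 2;
                B = 2 * vj ^ 2 - v1 * v2 - vk ^ 2;
                G = G
            in - t * E *
                 (B / (3 * lam * (1 + lam * t)) + 2 * S / (3 * xi)
                  + t * (vj - vk) * (2 * vj + lam * t * (v1 + v2)) / (2 * (1 + lam * t) ^ 2))
               + (1 - E) *
                 (2 * S / (3 * xi ^ 2) + B / (3 * lam) * (1 / xi - 1 / lam)
                  - t * (2 * vj + lam * t * (v1 + v2)) / (2 * (1 + lam * t))
                    * ((vj - vk) / lam + (v1 + v2) / xi))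
               + X * xi / lam ^ 2 * G *
                 (B / (3 * lam)
                  + t * (vj - vk) * (2 * vj + lam * t * (v1 + v2)) / (2 * (1 + lam * t))))"
proof -
  define a where "a = v1 + v2"
  define S where "S = v1 ^ 2 + v1 * v2 + v2 ^ 2"
  define B where "B = 2 * vj ^ 2 - v1 * v2 - vk ^ 2"
  define W where "W = X * G"
  obtain d where dd: "1 + lam * t = d" by blast
  have "1 + lam * t > 0" using assms by (simp add: add_pos_nonneg)
  then have d0: "d > 0" using dd by simp
  have l0: "lam \<noteq> 0" "xi \<noteq> 0" "d \<noteq> 0" using assms d0 by auto
  have eR1: "R1 = E* F1 + (1-E)*(a/(2* xi) + (vj-vk)/(2* lam)) - E* a* t/2 - xi*(vj-vk)/(2* lam^2)* W"
    unfolding R1 c1 W_def a_def using l0 by (simp add: field_simps power2_eq_square power3_eq_cube)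
  have eR2: "R2 = E* F2 + (1-E)*(2* S/(3* xi^2) + B/(3* lam* xi) - B/(3* lam^2)) - E*(S* t^2/3 + (2* S/(3* xi) + B/(3* lam))* t) + xi* B/(3* lam^3)* W"
    unfolding R2 c2 W_def S_def B_def using l0 by (simp add: field_simps power2_eq_square power3_eq_cube)
  have k1: "F1 - a* t/2 = t*(vj-vk)/(2* d)"
    unfolding F1 dd a_def using hj l0 by (auto simp: field_simps) (auto simp: dd[symmetric] algebra_simps)
  have k2: "F2 - S* t^2/3 - B* t/(3* lam) = -(t* B/(3* lam* d))"
    unfolding F2 dd S_def B_def using hj l0 dd by (auto simp: field_simps power2_eq_square)
  have F1e: "F1 = a* t/2 + t*(vj-vk)/(2* d)" using k1 by simp
  have F2e: "F2 = S* t^2/3 + B* t/(3* lam) - t* B/(3* lam* d)" using k2 by simp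
  have f1a: "t*(2* vj+lam* t* a)/(2* d) = F1" by (simp add: F1 dd a_def)
  have f1b: "t*(vj-vk)*(2* vj+lam* t* a)/(2* d^2) = (vj-vk)* F1/d"
    unfolding f1a[symmetric] using l0 by (simp add: field_simps power2_eq_square)
  have main: "R2 + F2 - 2* R1* F1 = F2 + (- t* E*(B/(3* lam* d) + 2* S/(3* xi) + (vj-vk)* F1/d)
     + (1-E)*(2* S/(3* xi^2) + B/(3* lam)*(1/xi-1/lam) - F1*((vj-vk)/lam + a/xi))
     + X* xi/lam^2* G*(B/(3* lam) + (vj-vk)* F1))"
    unfolding eR1 eR2 W_def
    unfolding F1e F2e
    using l0 by (simp add: field_simps power2_eq_square power3_eq_cube)
  show ?thesis
    using main unfolding Let_def dd a_def[symmetric] S_def[symmetric] B_def[symmetric]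
      f1b f1a[symmetric] by (simp add: mult.assoc)
qed


theorem theorem6:
  fixes lam xi v1 v2 t :: real and j :: nat
  assumes "lam > 0" and "xi > 0"
    and "(v2 < 0 \<and> 0 < v1) \<or> (0 < v2 \<and> v2 < v1)"
    and "t \<ge> 0" and "j \<in> {1, 2}"
  shows "Delta lam xi v1 v2 (vel v1 v2 j) t =
           E_free lam v1 v2 (vel v1 v2 j) t (\<lambda>x. x ^ 2) +
           (let vj = vel v1 v2 j; vk = vel v1 v2 (3 - j);
                S = v1 ^ 2 + v1 * v2 + v2 ^ 2;
                B = 2 * vj ^ 2 - v1 * v2 - vk ^ 2;
                G = Gamma_gen 0 (xi / lam) (xi / lam * (1 + lam * t))
            in - t * exp (- xi * t) *
                 (B / (3 * lam * (1 + lam * t)) + 2 * S / (3 * xi)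
                  + t * (vj - vk) * (2 * vj + lam * t * (v1 + v2)) / (2 * (1 + lam * t) ^ 2))
               + (1 - exp (- xi * t)) *
                 (2 * S / (3 * xi ^ 2) + B / (3 * lam) * (1 / xi - 1 / lam)
                  - t * (2 * vj + lam * t * (v1 + v2)) / (2 * (1 + lam * t))
                    * ((vj - vk) / lam + (v1 + v2) / xi))
               + exp (xi / lam) * xi / lam ^ 2 * G *
                 (B / (3 * lam)
                  + t * (vj - vk) * (2 * vj + lam * t * (v1 + v2)) / (2 * (1 + lam * t))))
         \<and> E_free lam v1 v2 (vel v1 v2 j) t (\<lambda>x. x ^ 2) =
           t ^ 2 * (3 * (vel v1 v2 j) ^ 2 + lam * t * (v1 ^ 2 + v1 * v2 + v2 ^ 2))
             / (3 * (1 + lam * t))"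
  proof -
  define vj where "vj = vel v1 v2 j"
  define vk where "vk = vel v1 v2 (3 - j)"
  have hj: "(vj = v1 \<and> vk = v2) \<or> (vj = v2 \<and> vk = v1)"
    using assms(5) by (auto simp: vj_def vk_def vel_def)
  have v21: "v2 < v1" using assms(3) by auto
  have l0: "lam \<noteq> 0" using assms by simp
  have m1: "E_free lam v1 v2 vj s (\<lambda>x. x) = 0 * s^2 + ((v1+v2)/2) * s + (vj-vk)/(2 * lam) + (- ((vj-vk)/(2 * lam)))/(1+lam * s)"
    if "s \<ge> 0" for s
  proof -
    obtain d where dd: "1 + lam * s = d" by blast
    have "1 + lam * s > 0" using assms that by (simp add: add_pos_nonneg)
    then have d0: "d \<noteq> 0" using dd by simp
    show ?thesis unfolding Ef1[OF assms(1) v21 that] dd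
      using hj l0 d0 by (auto simp: field_simps) (auto simp: dd[symmetric] algebra_simps)
  qed
  have m2: "E_free lam v1 v2 vj s (\<lambda>x. x^2) = ((v1^2 + v1 * v2 + v2^2)/3) * s^2 + ((2 * vj^2 - v1 * v2 - vk^2)/(3 * lam)) * s
      + (- ((2 * vj^2 - v1 * v2 - vk^2)/(3 * lam^2))) + ((2 * vj^2 - v1 * v2 - vk^2)/(3 * lam^2))/(1+lam * s)"
    if "s \<ge> 0" for s
  proof -
    obtain d where dd: "1 + lam * s = d" by blast
    have "1 + lam * s > 0" using assms that by (simp add: add_pos_nonneg)
    then have d0: "d \<noteq> 0" using dd by simp
    show ?thesis unfolding Ef2[OF assms(1) v21 that] dd
      using hj l0 d0 apply (auto simp: field_simps)
      apply (simp_all add: dd[symmetric])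
      apply (simp_all add: algebra_simps power2_eq_square power3_eq_cube power4_eq_xxxx)
      done
  qed
  note R1 = Ereset_gen[OF assms(1,2,4) m1]
  note R2 = Ereset_gen[OF assms(1,2,4) m2]
  note X = final_alg[OF assms(1,2,4) hj R1 R2 Ef1[OF assms(1) v21 assms(4)] Ef2[OF assms(1) v21 assms(4)]
     refl refl refl refl refl refl refl refl]
  show ?thesis unfolding Delta_def vj_def[symmetric] vk_def[symmetric]
    by (rule conjI[OF X Ef2[OF assms(1) v21 assms(4)]])
qed

end
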